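(* Consider Setting B with the regular nodes running Algorithm 2, and suppose $\{\mathcal G[k]\}_{k\ge0}$ is jointly strongly $(3f+1)$-robust w.r.t. $\mathcal S$, with $T\in\mathbb N_+$ the interval length from that definition. Then for every $f$-total Byzantine adversarial set and behavior, and every $i\in\mathcal R$: $$\tau_i[k]\neq\omega\ \text{ for all }k\ge (N-|\mathcal S|)T,\qquad\text{and}\qquad \tau_i[k]\le 2(N-|\mathcal S|)T\ \text{ for all }k\ge (N-|\mathcal S|)T.$$
   Context: Setting B. Scalar system $x[k+1]=ax[k]$, $a\in\mathbb R$, monitored by nodes $\mathcal V=\{1,\dots,N\}$ with measurements $y_i[k]=c_ix[k]$, $c_i\in\mathbb R$. Source set $\mathcal S=\{i\in\mathcal V:c_i\neq0\}$. Time-varying directed graphs $\mathcal G[k]=(\mathcal V,\mathcal E[k])$, $\mathcal N_i[k]=\{l\ne i:(l,i)\in\mathcal E[k]\}$; the union graph over an interval has the union of the edge sets. An unknown set $\mathcal A\subseteq\mathcal V$ of adversarial nodes with $|\mathcal A|\le f$ ($f$-total model; $\mathcal A$ may intersect $\mathcal S$); $\mathcal R=\mathcal V\setminus\mathcal A$ are regular. Adversaries are Byzantine: at each time they may send arbitrary, possibly different values (of both estimate and freshness index) to different out-neighbors, or send nothing, and may collude. At each time $k$, each node $l$ sends to its out-neighbors a pair (estimate, freshness index); regular $l$ sends its true $(\hat x_l[k],\tau_l[k])$. Algorithm 2 (executed by regular nodes). Regular source $i\in\mathcal S$: $\tau_i[k]=0$ for all $k$ and $\hat x_i[k+1]=a\hat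 x_i[k]+l_i(y_i[k]-c_i\hat x_i[k])$ with observer gain $l_i$. Regular non-source $i$: keeps $\hat x_i[k]$ (arbitrary initial), $\tau_i[k]\in\mathbb N\cup\{\omega\}$ with $\tau_i[0]=\omega$, and a list $\mathcal M_i$ of distinct node labels (initially empty, at most $2f+1$ entries, stored in $2f+1$ slots) with, for each $l\in\mathcal M_i$, a stored estimate $v_{i,l}$, stored index $d_{i,l}\in\mathbb N$ and time stamp $\phi_{i,l}$. At time $k$ let $\mathcal J_i[k]$ be the set of $l\in\mathcal N_i[k]$ whose reported index $\tau_l[k]$ lies in $\mathbb N$ and satisfies $\tau_l[k]\le k$. "Appending $l$ at time $k$" means: put $l$ in $\mathcal M_i$ (if absent), set $v_{i,l}=\hat x_l[k]$, $d_{i,l}=\tau_l[k]$ (reported values), $\phi_{i,l}=k$. Filtering update (F) at time $k$ (requires $|\mathcal M_i|=2f+1$): set $\tau_i[k+1]=\max_{l\in\mathcal M_i}d_{i,l}+1$; form $\bar x_{i,l}[k]=a^{k-\phi_{i,l}}v_{i,l}$ for $l\in\mathcal M_i$; discard the $f$ largest and $f$ smallest of these $2f+1$ values, call the remaining one $\bar x_i[k]$, and set $\hat x_i[k+1]=a\bar x_i[k]$. Case $\tau_i[k]=\omega$: let $\mathcal J'=\mathcal J_i[k]\setminus\mathcal M_i$. If $|\mathcal M_i|+|\mathcal J'|<2f+1$, append every $l\in\mathcal J'$, set $\tau_i[k+1]=\omega$ and $\hat x_i[k+1]=a\hat x_i[k]$. Otherwise append the $2f+1-|\mathcal M_i|$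 nodes of $\mathcal J'$ with smallest reported indices (ties broken arbitrarily) and perform (F). Case $\tau_i[k]\ne\omega$: for each $l\in\mathcal J_i[k]\cap\mathcal M_i$ with reported $\tau_l[k]<d_{i,l}$, append $l$ (refreshing its entries); then rank the nodes of $\mathcal M_i\cup(\mathcal J_i[k]\setminus\mathcal M_i)$ by index ($d_{i,l}$ for $l\in\mathcal M_i$, reported $\tau_l[k]$ otherwise), keep the $2f+1$ with smallest index (ties arbitrary), appending newcomers and deleting dropped nodes (a retained node keeps its storage slot; a newcomer occupies the slot of a dropped node), and perform (F). In all cases, after the step every stored $d_{i,l}$ is incremented by $1$, and $\mathcal M_i$, $v$, $\phi$ carry over to time $k+1$. Definitions. For a graph $\mathcal G=(\mathcal V,\mathcal E)$ with in-neighbor sets $\mathcal N_i$ and $r\in\mathbb N_+$, a set $\mathcal C\subseteq\mathcal V$ is $r$-reachable if some $i\in\mathcal C$ has $|\mathcal N_i\setminus\mathcal C|\ge r$. $\mathcal G$ is strongly $r$-robust w.r.t. $\mathcal S\subset\mathcal V$ if every nonempty $\mathcal C\subseteq\mathcal V\setminus\mathcal S$ is $r$-reachable. A sequence $\{\mathcal G[k]\}$ is jointly strongly $r$-robust w.r.t. $\mathcal S$ if there is $T\in\mathbb N_+$ such that the union graph over $[kT,(k+1)T-1]$ is strongly $r$-robust w.r.t. $\mathcal S$ for every $k\in\mathbb N$. *)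

theory Defs
  imports Complex_Main
begin

text \<open>Nodes are the naturals 1..N. An edge (l,i) is directed from l to i.\<close>

definition nodes :: "nat \<Rightarrow> nat set" where
  "nodes N = {1..N}"

definition in_nbrs :: "nat \<Rightarrow> (nat \<times> nat) set \<Rightarrow> nat \<Rightarrow> nat set" where
  "in_nbrs N Ed i = {l \<in> nodes N. l \<noteq> i \<and> (l, i) \<in> Ed}"

definition sources :: "nat \<Rightarrow> (nat \<Rightarrow> real) \<Rightarrow> nat set" where
  "sources N c = {i \<in> nodes N. c i \<noteq> 0}"

definition union_edges :: "(nat \<Rightarrow> (nat \<times> nat) set) \<Rightarrow> nat \<Rightarrow> nat \<Rightarrow> (nat \<times> nat) set" where
  "union_edges E k0 k1 = (\<Union>j\<in>{k0..<k1}. E j)"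

definition r_reachable :: "nat \<Rightarrow> (nat \<times> nat) set \<Rightarrow> nat set \<Rightarrow> nat \<Rightarrow> bool" where
  "r_reachable N Ed C r \<longleftrightarrow> (\<exists>i\<in>C. card (in_nbrs N Ed i - C) \<ge> r)"

definition strongly_robust :: "nat \<Rightarrow> (nat \<times> nat) set \<Rightarrow> nat set \<Rightarrow> nat \<Rightarrow> bool" where
  "strongly_robust N Ed S r \<longleftrightarrow>
     (\<forall>C. C \<subseteq> nodes N - S \<and> C \<noteq> {} \<longrightarrow> r_reachable N Ed C r)"

definition jointly_strongly_robust_T ::
  "nat \<Rightarrow> (nat \<Rightarrow> (nat \<times> nat) set) \<Rightarrow> nat set \<Rightarrow> nat \<Rightarrow> nat \<Rightarrow> bool" where
  "jointly_strongly_robust_T N E S r T \<longleftrightarrow>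
     T > 0 \<and> (\<forall>k. strongly_robust N (union_edges E (k * T) ((k + 1) * T)) S r)"

definition jointly_strongly_robust ::
  "nat \<Rightarrow> (nat \<Rightarrow> (nat \<times> nat) set) \<Rightarrow> nat set \<Rightarrow> nat \<Rightarrow> bool" where
  "jointly_strongly_robust N E S r \<longleftrightarrow> (\<exists>T. jointly_strongly_robust_T N E S r T)"

text \<open>Freshness indices live in nat option: None stands for omega,
  Some t for the natural number t.\<close>

record nstate =
  est  :: real
  fidx :: "nat option"      \<comment> \<open>freshness index tau_i[k]\<close>
  mem  :: "nat set"
  sv   :: "nat \<Rightarrow> real"
  sd   :: "nat \<Rightarrow> nat"
  sphi :: "nat \<Rightarrow> nat"

text \<open>Remaining value after discarding the f largest and f smallest of the
  (multiset of) values g l, l in M (M has 2f+1 elements).\<close>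
definition trim_mid :: "nat \<Rightarrow> (nat \<Rightarrow> real) \<Rightarrow> nat set \<Rightarrow> real" where
  "trim_mid f g M = sort (map g (sorted_list_of_set M)) ! f"

definition upd :: "nat set \<Rightarrow> (nat \<Rightarrow> 'b) \<Rightarrow> (nat \<Rightarrow> 'b) \<Rightarrow> nat \<Rightarrow> 'b" where
  "upd App new old l = (if l \<in> App then new l else old l)"

definition store ::
  "nat set \<Rightarrow> (nat \<Rightarrow> real) \<Rightarrow> (nat \<Rightarrow> nat) \<Rightarrow> (nat \<Rightarrow> nat) \<Rightarrow> nstate \<Rightarrow> bool" where
  "store M' v' d' ph' s' \<longleftrightarrow>
     mem s' = M' \<and> (\<forall>l\<in>M'. sv s' l = v' l \<and> sd s' l = d' l + 1 \<and> sphi s' l = ph' l)"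

definition filt ::
  "nat \<Rightarrow> real \<Rightarrow> nat \<Rightarrow> nat set \<Rightarrow> (nat \<Rightarrow> real) \<Rightarrow> (nat \<Rightarrow> nat) \<Rightarrow> (nat \<Rightarrow> nat)
   \<Rightarrow> nstate \<Rightarrow> bool" where
  "filt f a k M' v' d' ph' s' \<longleftrightarrow>
     fidx s' = Some (Max (d' ` M') + 1) \<and>
     est s' = a * trim_mid f (\<lambda>l. a ^ (k - ph' l) * v' l) M'"

text \<open>One step at time k of a regular non-source node with state s, in-neighbour
  set Nin, received messages rcv (rcv l = None: nothing received from l), and
  successor state s'. Ties are broken arbitrarily (existential choice).\<close>
definition ns_step ::
  "nat \<Rightarrow> real \<Rightarrow> nat \<Rightarrow> nstate \<Rightarrow> nat set \<Rightarrow> (nat \<Rightarrow> (real \<times> nat option) option)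
   \<Rightarrow> nstate \<Rightarrow> bool" where
  "ns_step f a k s Nin rcv s' \<longleftrightarrow>
    (let J = {l \<in> Nin. \<exists>xv t. rcv l = Some (xv, Some t) \<and> t \<le> k};
         rx = (\<lambda>l. fst (the (rcv l)));
         rt = (\<lambda>l. the (snd (the (rcv l))));
         kk = (\<lambda>l::nat. k);
         M = mem s
     in if fidx s = None then
          (let J' = J - M in
           if card M + card J' < 2 * f + 1 then
             store (M \<union> J') (upd J' rx (sv s)) (upd J' rt (sd s)) (upd J' kk (sphi s)) s'
             \<and> fidx s' = None \<and> est s' = a * est s
           else
             (\<exists>A. A \<subseteq> J' \<and> card A = 2 * f + 1 - card M \<and>
                  (\<forall>l\<in>A. \<forall>l'\<in>J' - A. rt l \<le> rt l') \<and>
                  store (M \<union> A) (upd A rx (sv s)) (upd A rt (sd s)) (upd A kk (sphi s)) s' \<and>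
                  filt f a k (M \<union> A) (upd A rx (sv s)) (upd A rt (sd s)) (upd A kk (sphi s)) s'))
        else
          (let Ref = {l \<in> J \<inter> M. rt l < sd s l};
               idx = (\<lambda>l. if l \<in> M then (if l \<in> Ref then rt l else sd s l) else rt l);
               C = M \<union> (J - M)
           in \<exists>K. K \<subseteq> C \<and> card K = 2 * f + 1 \<and>
                  (\<forall>l\<in>K. \<forall>l'\<in>C - K. idx l \<le> idx l') \<and>
                  (let App = Ref \<union> (K - M) in
                    store K (upd App rx (sv s)) (upd App rt (sd s)) (upd App kk (sphi s)) s' \<and>
                    filt f a k K (upd App rx (sv s)) (upd App rt (sd s)) (upd App kk (sphi s)) s')))"

text \<open>An execution of Algorithm 2 by the regular nodes (nodes N - Adv), for the
  system x[k+1] = a x[k], measurements y_i = c_i x, observer gains L,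
  graph sequence E, adversarial set Adv, node states st i k and messages
  msg k l i (what i receives from l at time k; None = nothing).
  Adversarial messages are unconstrained (Byzantine).\<close>
definition alg2_exec ::
  "nat \<Rightarrow> nat \<Rightarrow> real \<Rightarrow> (nat \<Rightarrow> real) \<Rightarrow> (nat \<Rightarrow> real) \<Rightarrow> (nat \<Rightarrow> (nat \<times> nat) set)
   \<Rightarrow> nat set \<Rightarrow> (nat \<Rightarrow> real) \<Rightarrow> (nat \<Rightarrow> nat \<Rightarrow> nstate)
   \<Rightarrow> (nat \<Rightarrow> nat \<Rightarrow> nat \<Rightarrow> (real \<times> nat option) option) \<Rightarrow> bool" where
  "alg2_exec N f a c L E Adv x st msg \<longleftrightarrow>
     (\<forall>k. x (Suc k) = a * x k) \<and>
     (\<forall>i \<in> nodes N - Adv. c i \<noteq> 0 \<longrightarrow>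
        (\<forall>k. fidx (st i k) = Some 0 \<and>
             est (st i (Suc k)) = a * est (st i k) + L i * (c i * x k - c i * est (st i k)))) \<and>
     (\<forall>i \<in> nodes N - Adv. c i = 0 \<longrightarrow>
        fidx (st i 0) = None \<and> mem (st i 0) = {} \<and>
        (\<forall>k. ns_step f a k (st i k) (in_nbrs N (E k) i) (\<lambda>l. msg k l i) (st i (Suc k)))) \<and>
     (\<forall>k. \<forall>l \<in> nodes N - Adv. \<forall>i \<in> nodes N. l \<in> in_nbrs N (E k) i \<longrightarrow>
        msg k l i = Some (est (st l k), fidx (st l k)))"

end

theory Submission
  imports Defs
begin


definition ninv :: "nat \<Rightarrow> nat \<Rightarrow> nstate \<Rightarrow> bool" where
  "ninv f k s \<longleftrightarrow> finite (mem s) \<and> (fidx s = None \<longrightarrow> card (mem s) \<le> 2*f) \<and>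
     (fidx s \<noteq> None \<longrightarrow> card (mem s) = 2*f+1 \<and> fidx s = Some (Max (sd s ` mem s))) \<and>
     (\<forall>l\<in>mem s. sd s l \<le> k) \<and> (\<forall>t. fidx s = Some t \<longrightarrow> t \<le> k)"

lemma ns_step_None:
  assumes "ns_step f a k s Nin rcv s'" "fidx s = None"
   "J = {l \<in> Nin. \<exists>xv t. rcv l = Some (xv, Some t) \<and> t \<le> k}"
      and "rx = (\<lambda>l. fst (the (rcv l)))" and "rt = (\<lambda>l. the (snd (the (rcv l))))"
      and "kk = (\<lambda>l::nat. k)"
  shows "(card (mem s) + card (J - mem s) < 2 * f + 1 \<and>
           store (mem s \<union> (J - mem s)) (upd (J - mem s) rx (sv s)) (upd (J - mem s) rt (sd s)) (upd (J - mem s) kk (sphi s)) s'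
             \<and> fidx s' = None) \<or>
         (\<not> card (mem s) + card (J - mem s) < 2 * f + 1 \<and>
          (\<exists>A. A \<subseteq> J - mem s \<and> card A = 2 * f + 1 - card (mem s) \<and>
                  store (mem s \<union> A) (upd A rx (sv s)) (upd A rt (sd s)) (upd A kk (sphi s)) s' \<and>
                  filt f a k (mem s \<union> A) (upd A rx (sv s)) (upd A rt (sd s)) (upd A kk (sphi s)) s'))"
  using assms unfolding ns_step_def Let_def
  by (auto split: if_splits)

lemma ns_step_Some:
  assumes "ns_step f a k s Nin rcv s'" "fidx s \<noteq> None"
   "J = {l \<in> Nin. \<exists>xv t. rcv l = Some (xv, Some t) \<and> t \<le> k}"
      and "rx = (\<lambda>l. fst (the (rcv l)))" and "rt = (\<lambda>l. the (snd (the (rcv l))))"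
      and "kk = (\<lambda>l::nat. k)"
   "Ref = {l \<in> J \<inter> mem s. rt l < sd s l}"
   "idx = (\<lambda>l. if l \<in> mem s then (if l \<in> Ref then rt l else sd s l) else rt l)"
  shows "\<exists>K. K \<subseteq> mem s \<union> J \<and> card K = 2 * f + 1 \<and>
                  (\<forall>l\<in>K. \<forall>l'\<in>(mem s \<union> J) - K. idx l \<le> idx l') \<and>
                    store K (upd (Ref \<union> (K - mem s)) rx (sv s)) (upd (Ref \<union> (K - mem s)) rt (sd s)) (upd (Ref \<union> (K - mem s)) kk (sphi s)) s' \<and>
                    filt f a k K (upd (Ref \<union> (K - mem s)) rx (sv s)) (upd (Ref \<union> (K - mem s)) rt (sd s)) (upd (Ref \<union> (K - mem s)) kk (sphi s)) s'"
proof -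
  have e: "mem s \<union> (J - mem s) = mem s \<union> J" by auto
  show ?thesis
  using assms(1,2) unfolding ns_step_def Let_def assms(3-8)[symmetric] e
  by (auto simp: assms(8))
qed

lemma store_filt:
  assumes "store M' v' d' ph' s'" "filt f a k M' v' d' ph' s'" "finite M'" "M' \<noteq> {}"
    "\<forall>l\<in>M'. d' l \<le> k"
  shows "fidx s' = Some (Max (sd s' ` mem s')) \<and> (\<forall>l\<in>mem s'. sd s' l \<le> Suc k) \<and>
         (\<forall>t. fidx s' = Some t \<longrightarrow> t \<le> Suc k)"
proof -
  have m: "mem s' = M'" and sdv: "\<forall>l\<in>M'. sd s' l = d' l + 1" using assms(1) unfolding store_def by auto
  have fi: "fidx s' = Some (Max (d' ` M') + 1)" using assms(2) unfolding filt_def by auto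
  have "sd s' ` mem s' = (\<lambda>l. d' l + 1) ` M'" using m sdv by auto
  hence "Max (sd s' ` mem s') = Max (d' ` M') + 1" using Max_add_commute[OF assms(3,4), of d' 1] by simp
  moreover have "Max (d' ` M') \<le> k" using assms(3,4,5) by auto
  ultimately show ?thesis using fi m sdv assms(5) by auto
qed

lemma inv_step:
  assumes st: "ns_step f a k s Nin rcv s'" and fin: "finite Nin" and iv: "ninv f k s"
  shows "ninv f (Suc k) s'"
proof -
  define J where "J = {l \<in> Nin. \<exists>xv t. rcv l = Some (xv, Some t) \<and> t \<le> k}"
  define rx where "rx = (\<lambda>l. fst (the (rcv l)))"
  define rt where "rt = (\<lambda>l. the (snd (the (rcv l))))"
  define kk where "kk = (\<lambda>l::nat. k)"
  have finJ: "finite J" using fin unfolding J_def by auto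
  have rtJ: "\<forall>l\<in>J. rt l \<le> k" unfolding J_def rt_def by auto
  have finM: "finite (mem s)" and sdM: "\<forall>l\<in>mem s. sd s l \<le> k" using iv unfolding ninv_def by auto
  show ?thesis
  proof (cases "fidx s = None")
    case True
    have cM: "card (mem s) \<le> 2*f" using iv True unfolding ninv_def by auto
    from ns_step_None[OF st True J_def rx_def rt_def kk_def] show ?thesis
    proof
      assume h: "card (mem s) + card (J - mem s) < 2 * f + 1 \<and>
           store (mem s \<union> (J - mem s)) (upd (J - mem s) rx (sv s)) (upd (J - mem s) rt (sd s)) (upd (J - mem s) kk (sphi s)) s'
             \<and> fidx s' = None"
      hence m: "mem s' = mem s \<union> (J - mem s)" and sdv: "\<forall>l\<in>mem s'. sd s' l = upd (J - mem s) rt (sd s) l + 1"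
        unfolding store_def by auto
      have "card (mem s') \<le> card (mem s) + card (J - mem s)" unfolding m by (rule card_Un_le)
      moreover have "\<forall>l\<in>mem s'. sd s' l \<le> Suc k" using sdv m rtJ sdM unfolding upd_def by auto
      ultimately show "ninv f (Suc k) s'" using h finM finJ m unfolding ninv_def by auto
    next
      assume "\<not> card (mem s) + card (J - mem s) < 2 * f + 1 \<and>
          (\<exists>A. A \<subseteq> J - mem s \<and> card A = 2 * f + 1 - card (mem s) \<and>
                  store (mem s \<union> A) (upd A rx (sv s)) (upd A rt (sd s)) (upd A kk (sphi s)) s' \<and>
                  filt f a k (mem s \<union> A) (upd A rx (sv s)) (upd A rt (sd s)) (upd A kk (sphi s)) s')"
      then obtain A where A: "A \<subseteq> J - mem s" "card A = 2 * f + 1 - card (mem s)"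
         "store (mem s \<union> A) (upd A rx (sv s)) (upd A rt (sd s)) (upd A kk (sphi s)) s'"
         "filt f a k (mem s \<union> A) (upd A rx (sv s)) (upd A rt (sd s)) (upd A kk (sphi s)) s'" by blast
      have finA: "finite A" using A(1) finJ finite_subset by blast
      have cU: "card (mem s \<union> A) = 2*f+1" using card_Un_disjoint[OF finM finA] A(1,2) cM by auto
      hence ne: "mem s \<union> A \<noteq> {}" by auto
      have "\<forall>l\<in>mem s \<union> A. upd A rt (sd s) l \<le> k" using A(1) rtJ sdM unfolding upd_def by auto
      from store_filt[OF A(3,4) _ ne this] finM finA
      have "fidx s' = Some (Max (sd s' ` mem s')) \<and> (\<forall>l\<in>mem s'. sd s' l \<le> Suc k) \<and>
         (\<forall>t. fidx s' = Some t \<longrightarrow> t \<le> Suc k)" by auto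
      moreover have "mem s' = mem s \<union> A" using A(3) unfolding store_def by auto
      ultimately show "ninv f (Suc k) s'" using cU finM finA unfolding ninv_def by auto
    qed
  next
    case False
    define Ref where "Ref = {l \<in> J \<inter> mem s. rt l < sd s l}"
    define idx where "idx = (\<lambda>l. if l \<in> mem s then (if l \<in> Ref then rt l else sd s l) else rt l)"
    from ns_step_Some[OF st False J_def rx_def rt_def kk_def Ref_def idx_def] obtain K where K: "K \<subseteq> mem s \<union> J" "card K = 2 * f + 1"
      "store K (upd (Ref \<union> (K - mem s)) rx (sv s)) (upd (Ref \<union> (K - mem s)) rt (sd s)) (upd (Ref \<union> (K - mem s)) kk (sphi s)) s'"
      "filt f a k K (upd (Ref \<union> (K - mem s)) rx (sv s)) (upd (Ref \<union> (K - mem s)) rt (sd s)) (upd (Ref \<union> (K - mem s)) kk (sphi s)) s'"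
      by blast
    have finK: "finite K" using K(1) finJ finM finite_subset by blast
    hence ne: "K \<noteq> {}" using K(2) by auto
    have "\<forall>l\<in>K. upd (Ref \<union> (K - mem s)) rt (sd s) l \<le> k"
    proof
      fix l assume l: "l \<in> K"
      show "upd (Ref \<union> (K - mem s)) rt (sd s) l \<le> k"
      proof (cases "l \<in> Ref \<union> (K - mem s)")
        case True
        hence "l \<in> J" using l K(1) unfolding Ref_def by blast
        thus ?thesis using True rtJ unfolding upd_def by simp
      next
        case False
        hence "l \<in> mem s" using l by blast
        thus ?thesis using False sdM unfolding upd_def by simp
      qed
    qed
    from store_filt[OF K(3,4) finK ne this]
    have "fidx s' = Some (Max (sd s' ` mem s')) \<and> (\<forall>l\<in>mem s'. sd s' l \<le> Suc k) \<and>
         (\<forall>t. fidx s' = Some t \<longrightarrow> t \<le> Suc k)" by auto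
    moreover have "mem s' = K" using K(3) unfolding store_def by auto
    ultimately show ?thesis using K(2) finK unfolding ninv_def by auto
  qed
qed

lemma step_Some_Some:
  assumes st: "ns_step f a k s Nin rcv s'" and "fidx s \<noteq> None"
  shows "fidx s' \<noteq> None"
proof -
  from ns_step_Some[OF st assms(2) refl refl refl refl refl refl] obtain K v' d' ph' where "filt f a k K v' d' ph' s'" by blast
  thus ?thesis unfolding filt_def by auto
qed

lemma step_None_None:
  assumes st: "ns_step f a k s Nin rcv s'" and "fidx s = None" "fidx s' = None"
  shows "mem s \<union> {l \<in> Nin. \<exists>xv t. rcv l = Some (xv, Some t) \<and> t \<le> k} \<subseteq> mem s'"
  using ns_step_None[OF st assms(2) refl refl refl refl] assms(3) unfolding store_def filt_def by auto

lemma stepB: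
  assumes st: "ns_step f a k s Nin rcv s'" and fin: "finite Nin" and iv: "ninv f k s"
    and Sm: "fidx s \<noteq> None"
  shows "(\<forall>l\<in>mem s'. sd s' l \<le> Suc b) \<or>
         {l\<in>mem s. sd s l \<le> b} \<union> {l \<in> Nin. \<exists>xv t. rcv l = Some (xv, Some t) \<and> t \<le> k \<and> t \<le> b}
            \<subseteq> {l\<in>mem s'. sd s' l \<le> Suc b}"
proof -
  define J where "J = {l \<in> Nin. \<exists>xv t. rcv l = Some (xv, Some t) \<and> t \<le> k}"
  define rx where "rx = (\<lambda>l. fst (the (rcv l)))"
  define rt where "rt = (\<lambda>l. the (snd (the (rcv l))))"
  define kk where "kk = (\<lambda>l::nat. k)"
  define Ref where "Ref = {l \<in> J \<inter> mem s. rt l < sd s l}"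
  define idx where "idx = (\<lambda>l. if l \<in> mem s then (if l \<in> Ref then rt l else sd s l) else rt l)"
  from ns_step_Some[OF st Sm J_def rx_def rt_def kk_def Ref_def idx_def] obtain K where K: "K \<subseteq> mem s \<union> J" "card K = 2 * f + 1"
    "\<forall>l\<in>K. \<forall>l'\<in>(mem s \<union> J) - K. idx l \<le> idx l'"
    "store K (upd (Ref \<union> (K - mem s)) rx (sv s)) (upd (Ref \<union> (K - mem s)) rt (sd s)) (upd (Ref \<union> (K - mem s)) kk (sphi s)) s'"
    by blast
  have m: "mem s' = K" using K(4) unfolding store_def by auto
  have sdK: "\<forall>l\<in>K. sd s' l = idx l + 1" using K(4) unfolding store_def upd_def idx_def Ref_def by auto
  define Uc where "Uc = {l \<in> mem s \<union> J. idx l \<le> b}"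
  have sub: "{l\<in>mem s. sd s l \<le> b} \<union> {l \<in> Nin. \<exists>xv t. rcv l = Some (xv, Some t) \<and> t \<le> k \<and> t \<le> b} \<subseteq> Uc"
  proof
    fix l assume "l \<in> {l\<in>mem s. sd s l \<le> b} \<union> {l \<in> Nin. \<exists>xv t. rcv l = Some (xv, Some t) \<and> t \<le> k \<and> t \<le> b}"
    thus "l \<in> Uc"
    proof
      assume "l \<in> {l\<in>mem s. sd s l \<le> b}" thus ?thesis unfolding Uc_def idx_def Ref_def by auto
    next
      assume h: "l \<in> {l \<in> Nin. \<exists>xv t. rcv l = Some (xv, Some t) \<and> t \<le> k \<and> t \<le> b}"
      hence "l \<in> J" "rt l \<le> b" unfolding J_def rt_def by auto
      thus ?thesis unfolding Uc_def idx_def Ref_def by auto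
    qed
  qed
  show ?thesis
  proof (cases "Uc \<subseteq> K")
    case True
    have "Uc \<subseteq> {l\<in>mem s'. sd s' l \<le> Suc b}" using True m sdK unfolding Uc_def by auto
    thus ?thesis using sub by blast
  next
    case False
    then obtain l' where l': "l' \<in> Uc" "l' \<notin> K" by blast
    have "\<forall>l\<in>K. idx l \<le> b"
    proof
      fix l assume "l \<in> K"
      hence "idx l \<le> idx l'" using K(3) l' unfolding Uc_def by blast
      thus "idx l \<le> b" using l' unfolding Uc_def by simp
    qed
    thus ?thesis using m sdK by auto
  qed
qed




lemma countdown:
  fixes D :: "nat \<Rightarrow> nat set"
  assumes mono: "\<And>m. D (Suc m) \<subseteq> D m" and prog: "\<And>m. D m \<noteq> {} \<Longrightarrow> D (Suc m) \<noteq> D m"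
    and fin: "finite (D 0)" and c0: "card (D 0) \<le> n"
  shows "D n = {}"
proof -
  have finm: "finite (D m)" for m
  proof (induction m)
    case 0 show ?case using fin .
  next
    case (Suc m) thus ?case using mono finite_subset by blast
  qed
  have P: "D m = {} \<or> card (D m) + m \<le> n" for m
  proof (induction m)
    case 0 thus ?case using c0 by simp
  next
    case (Suc m)
    show ?case
    proof (cases "D m = {}")
      case True thus ?thesis using mono[of m] by blast
    next
      case False
      hence "D (Suc m) \<subset> D m" using mono[of m] prog[of m] by blast
      hence "card (D (Suc m)) < card (D m)" using finm psubset_card_mono by blast
      thus ?thesis using Suc False by auto
    qed
  qed
  from P[of n] show ?thesis using finm[of n] by auto
qed

locale ctx =
  fixes N f T :: nat and a :: real and c L x :: "nat \<Rightarrow> real"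
    and E :: "nat \<Rightarrow> (nat \<times> nat) set" and Adv :: "nat set"
    and st :: "nat \<Rightarrow> nat \<Rightarrow> nstate"
    and msg :: "nat \<Rightarrow> nat \<Rightarrow> nat \<Rightarrow> (real \<times> nat option) option"
  assumes edges: "\<forall>k. E k \<subseteq> nodes N \<times> nodes N"
    and robust: "jointly_strongly_robust_T N E (sources N c) (3 * f + 1) T"
    and adv1: "Adv \<subseteq> nodes N" and adv2: "card Adv \<le> f"
    and exec: "alg2_exec N f a c L E Adv x st msg"
begin

abbreviation "n \<equiv> N - card (sources N c)"

lemma Tpos: "T > 0" using robust unfolding jointly_strongly_robust_T_def by auto

lemma reg_src: "i \<in> nodes N - Adv \<Longrightarrow> c i \<noteq> 0 \<Longrightarrow> fidx (st i k) = Some 0"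
  using exec unfolding alg2_exec_def by blast

lemma reg_step: "i \<in> nodes N - Adv \<Longrightarrow> c i = 0 \<Longrightarrow>
   ns_step f a k (st i k) (in_nbrs N (E k) i) (\<lambda>l. msg k l i) (st i (Suc k))"
  using exec unfolding alg2_exec_def by blast

lemma reg_init: "i \<in> nodes N - Adv \<Longrightarrow> c i = 0 \<Longrightarrow> fidx (st i 0) = None \<and> mem (st i 0) = {}"
  using exec unfolding alg2_exec_def by blast

lemma msg_reg: "l \<in> nodes N - Adv \<Longrightarrow> i \<in> nodes N \<Longrightarrow> l \<in> in_nbrs N (E k) i \<Longrightarrow>
   msg k l i = Some (est (st l k), fidx (st l k))"
  using exec unfolding alg2_exec_def by blast

lemma fin_nbrs: "finite (in_nbrs N Ed i)"
  unfolding in_nbrs_def nodes_def by auto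

lemma inv_all: "i \<in> nodes N - Adv \<Longrightarrow> c i = 0 \<Longrightarrow> ninv f k (st i k)"
proof (induction k)
  case 0 thus ?case using reg_init[OF 0] unfolding ninv_def by auto
next
  case (Suc k) thus ?case using inv_step[OF reg_step fin_nbrs] by blast
qed

lemma some_mono: assumes "i \<in> nodes N - Adv" "c i = 0" "fidx (st i k) \<noteq> None" "k \<le> k'"
  shows "fidx (st i k') \<noteq> None"
  using assms(4)
proof (induction k' rule: dec_induct)
  case base thus ?case using assms(3) .
next
  case (step m) thus ?case using step_Some_Some[OF reg_step[OF assms(1,2)]] by blast
qed

lemma reg_valid: assumes "l \<in> nodes N - Adv" "fidx (st l k) = Some t" shows "t \<le> k"
proof (cases "c l = 0")
  case True thus ?thesis using inv_all[OF assms(1) True, of k] assms(2) unfolding ninv_def by auto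
next
  case False thus ?thesis using reg_src[OF assms(1) False, of k] assms(2) by auto
qed

lemma omega_mem: assumes "i \<in> nodes N - Adv" "c i = 0" "fidx (st i k') = None" "k \<le> k'"
  shows "mem (st i k) \<subseteq> mem (st i k')"
  using assms(4,3)
proof (induction k' rule: dec_induct)
  case base thus ?case by simp
next
  case (step m)
  have "fidx (st i m) = None" proof -
    have "m \<le> Suc m" by simp
    show ?thesis
    proof (rule ccontr)
      assume "fidx (st i m) \<noteq> None"
      from some_mono[OF assms(1,2) this \<open>m \<le> Suc m\<close>] step.prems show False by simp
    qed
  qed
  thus ?case using step step_None_None[OF reg_step[OF assms(1,2)]] by blast
qed

lemma send_J:
  assumes "l \<in> nodes N - Adv" "i \<in> nodes N" "l \<in> in_nbrs N (E k) i" "fidx (st l k) = Some t"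
  shows "l \<in> {l \<in> in_nbrs N (E k) i. \<exists>xv t. (\<lambda>l. msg k l i) l = Some (xv, Some t) \<and> t \<le> k \<and> t \<le> t0}
     \<or> t0 < t"
  using msg_reg[OF assms(1-3)] assms reg_valid[OF assms(1,4)] by auto

lemma progress1:
  assumes i: "i \<in> nodes N - Adv" "c i = 0" and G: "G \<subseteq> nodes N" "card G \<ge> 2*f+1"
    and snd: "\<forall>l\<in>G. \<exists>k\<in>{k1..<k2}. l \<in> in_nbrs N (E k) i \<and> l \<in> nodes N - Adv \<and> fidx (st l k) \<noteq> None"
  shows "fidx (st i k2) \<noteq> None"
proof
  assume N2: "fidx (st i k2) = None"
  have "G \<subseteq> mem (st i k2)"
  proof
    fix l assume "l \<in> G"
    then obtain k where k: "k \<in> {k1..<k2}" "l \<in> in_nbrs N (E k) i" "l \<in> nodes N - Adv" "fidx (st l k) \<noteq> None"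
      using snd by blast
    then obtain t where t: "fidx (st l k) = Some t" by auto
    have "Suc k \<le> k2" using k(1) by auto
    have N1: "fidx (st i (Suc k)) = None"
    proof (rule ccontr)
      assume "fidx (st i (Suc k)) \<noteq> None"
      from some_mono[OF i this \<open>Suc k \<le> k2\<close>] N2 show False by simp
    qed
    hence N0: "fidx (st i k) = None" proof -
      have "k \<le> Suc k" by simp
      show ?thesis
      proof (rule ccontr)
        assume "fidx (st i k) \<noteq> None"
        from some_mono[OF i this \<open>k \<le> Suc k\<close>] N1 show False by simp
      qed
    qed
    have "l \<in> {l \<in> in_nbrs N (E k) i. \<exists>xv t. msg k l i = Some (xv, Some t) \<and> t \<le> k}"
      using msg_reg[OF k(3) _ k(2)] i t reg_valid[OF k(3) t] k(2) by auto
    hence "l \<in> mem (st i (Suc k))" using step_None_None[OF reg_step[OF i] N0 N1] by blast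
    moreover have "mem (st i (Suc k)) \<subseteq> mem (st i k2)" using omega_mem[OF i N2] k(1) by auto
    ultimately show "l \<in> mem (st i k2)" by blast
  qed
  moreover have "finite (mem (st i k2))" "card (mem (st i k2)) \<le> 2*f"
    using inv_all[OF i, of k2] N2 unfolding ninv_def by auto
  ultimately have "card G \<le> card (mem (st i k2))" using card_mono by blast
  thus False using G(2) \<open>card (mem (st i k2)) \<le> 2*f\<close> by linarith
qed

lemma robust_pick:
  assumes C: "C \<subseteq> nodes N - sources N c" "C \<noteq> {}"
  shows "\<exists>i\<in>C. \<exists>G. G \<subseteq> (nodes N - Adv) - C \<and> card G \<ge> 2*f+1 \<and>
     (\<forall>l\<in>G. \<exists>k\<in>{p*T..<(Suc p)*T}. l \<in> in_nbrs N (E k) i)"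
proof -
  have "strongly_robust N (union_edges E (p * T) ((p + 1) * T)) (sources N c) (3 * f + 1)"
    using robust unfolding jointly_strongly_robust_T_def by blast
  hence "r_reachable N (union_edges E (p * T) ((p + 1) * T)) C (3 * f + 1)"
    using C unfolding strongly_robust_def by blast
  then obtain i where i: "i \<in> C" and cd: "card (in_nbrs N (union_edges E (p * T) ((p + 1) * T)) i - C) \<ge> 3*f+1"
    unfolding r_reachable_def by blast
  have finA: "finite Adv" using adv1 unfolding nodes_def by (auto intro: finite_subset)
  define G where "G = in_nbrs N (union_edges E (p * T) ((p + 1) * T)) i - C - Adv"
  have "card (in_nbrs N (union_edges E (p * T) ((p + 1) * T)) i - C) - card Adv \<le> card G"
    using diff_card_le_card_Diff[OF finA] unfolding G_def by simp
  hence "card G \<ge> 2*f+1" using cd adv2 by linarith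
  moreover have "G \<subseteq> (nodes N - Adv) - C" unfolding G_def in_nbrs_def by auto
  moreover have "\<forall>l\<in>G. \<exists>k\<in>{p*T..<(Suc p)*T}. l \<in> in_nbrs N (E k) i"
    unfolding G_def in_nbrs_def union_edges_def by auto
  ultimately have "G \<subseteq> (nodes N - Adv) - C \<and> card G \<ge> 2*f+1 \<and>
     (\<forall>l\<in>G. \<exists>k\<in>{p*T..<(Suc p)*T}. l \<in> in_nbrs N (E k) i)" by blast
  thus ?thesis using i by blast
qed

lemma card_ns: "card (nodes N - sources N c) = n"
proof -
  have "sources N c \<subseteq> nodes N" unfolding sources_def by auto
  moreover have "finite (nodes N)" "card (nodes N) = N" unfolding nodes_def by auto
  ultimately show ?thesis by (simp add: card_Diff_subset finite_subset)
qed

lemma part1: "i \<in> nodes N - Adv \<Longrightarrow> c i = 0 \<Longrightarrow> k \<ge> n * T \<Longrightarrow> fidx (st i k) \<noteq> None"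
proof -
  define D where "D m = {i \<in> nodes N - Adv. c i = 0 \<and> fidx (st i (m*T)) = None}" for m
  have "D n = {}"
  proof (rule countdown)
    fix m
    have "m*T \<le> Suc m * T" by simp
    show "D (Suc m) \<subseteq> D m"
    proof
      fix j assume j: "j \<in> D (Suc m)"
      hence jr: "j \<in> nodes N - Adv" "c j = 0" "fidx (st j (Suc m * T)) = None" unfolding D_def by auto
      have "fidx (st j (m * T)) = None"
      proof (rule ccontr)
        assume "fidx (st j (m*T)) \<noteq> None"
        from some_mono[OF jr(1,2) this \<open>m*T \<le> Suc m * T\<close>] jr(3) show False by simp
      qed
      thus "j \<in> D m" using jr unfolding D_def by auto
    qed
  next
    fix m assume ne: "D m \<noteq> {}"
    have "D m \<subseteq> nodes N - sources N c" unfolding D_def sources_def by auto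
    from robust_pick[OF this ne, of m] obtain i G where i: "i \<in> D m" and G: "G \<subseteq> (nodes N - Adv) - D m"
      "card G \<ge> 2*f+1" "\<forall>l\<in>G. \<exists>k\<in>{m*T..<(Suc m)*T}. l \<in> in_nbrs N (E k) i" by blast
    have ir: "i \<in> nodes N - Adv" "c i = 0" using i unfolding D_def by auto
    have "\<forall>l\<in>G. \<exists>k\<in>{m*T..<(Suc m)*T}. l \<in> in_nbrs N (E k) i \<and> l \<in> nodes N - Adv \<and> fidx (st l k) \<noteq> None"
    proof
      fix l assume l: "l \<in> G"
      then obtain k where k: "k\<in>{m*T..<(Suc m)*T}" "l \<in> in_nbrs N (E k) i" using G(3) by blast
      have lr: "l \<in> nodes N - Adv" "l \<notin> D m" using l G(1) by auto
      have "fidx (st l k) \<noteq> None"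
      proof (cases "c l = 0")
        case True
        hence "fidx (st l (m*T)) \<noteq> None" using lr unfolding D_def by auto
        thus ?thesis using some_mono[OF lr(1) True] k(1) by auto
      next
        case False thus ?thesis using reg_src[OF lr(1)] by auto
      qed
      thus "\<exists>k\<in>{m*T..<(Suc m)*T}. l \<in> in_nbrs N (E k) i \<and> l \<in> nodes N - Adv \<and> fidx (st l k) \<noteq> None"
        using k lr by blast
    qed
    from progress1[OF ir _ G(2) this] G(1) have "fidx (st i (Suc m * T)) \<noteq> None" by auto
    hence "i \<notin> D (Suc m)" unfolding D_def by auto
    thus "D (Suc m) \<noteq> D m" using i by blast
  next
    show "finite (D 0)" unfolding D_def nodes_def by auto
  next
    have "D 0 \<subseteq> nodes N - sources N c" unfolding D_def sources_def by auto
    moreover have "finite (nodes N - sources N c)" unfolding nodes_def by auto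
    ultimately show "card (D 0) \<le> n" using card_ns card_mono by metis
  qed
  moreover assume a: "i \<in> nodes N - Adv" "c i = 0" "k \<ge> n * T"
  ultimately have "fidx (st i (n*T)) \<noteq> None" unfolding D_def by auto
  thus "fidx (st i k) \<noteq> None" using some_mono[OF a(1,2) _ a(3)] by blast
qed

end



lemma fullness:
  assumes "finite M" "X \<subseteq> {l\<in>M. P l}" "finite X" "card M \<le> card X"
  shows "\<forall>l\<in>M. P l"
proof (rule ccontr)
  assume "\<not> (\<forall>l\<in>M. P l)"
  then obtain l0 where "l0 \<in> M" "\<not> P l0" by blast
  hence "{l\<in>M. P l} \<subset> M" by blast
  hence "card {l\<in>M. P l} < card M" using assms(1) psubset_card_mono by blast
  moreover have "card X \<le> card {l\<in>M. P l}" using assms(1,2) card_mono by (metis (no_types, lifting) finite_subset mem_Collect_eq subsetI)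
  ultimately show False using assms(4) by linarith
qed

context ctx begin

definition good :: "nat \<Rightarrow> nat \<Rightarrow> nat \<Rightarrow> bool" where
  "good k0 i k \<longleftrightarrow> fidx (st i k) \<noteq> None \<and> (\<forall>l\<in>mem (st i k). sd (st i k) l \<le> k - k0)"

lemma good_bound:
  assumes ir: "i \<in> nodes N - Adv" "c i = 0" and g: "good k0 i k" and t: "fidx (st i k) = Some t"
  shows "t \<le> k - k0"
proof -
  have iv: "ninv f k (st i k)" by (rule inv_all[OF ir])
  hence e: "t = Max (sd (st i k) ` mem (st i k))" and fin: "finite (mem (st i k))"
    and cm: "card (mem (st i k)) = 2*f+1" using t unfolding ninv_def by auto
  have ne: "mem (st i k) \<noteq> {}" using cm by auto
  have "\<forall>l\<in>mem (st i k). sd (st i k) l \<le> k - k0" using g unfolding good_def by blast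
  thus ?thesis unfolding e using fin ne by simp
qed

lemma good_step:
  assumes ir: "i \<in> nodes N - Adv" "c i = 0" and g: "good k0 i k" and kk: "k0 \<le> k"
  shows "good k0 i (Suc k)"
proof -
  have Sm: "fidx (st i k) \<noteq> None" using g unfolding good_def by blast
  have Sm': "fidx (st i (Suc k)) \<noteq> None" using step_Some_Some[OF reg_step[OF ir] Sm] .
  have e: "Suc k - k0 = Suc (k - k0)" using kk by simp
  have iv: "ninv f k (st i k)" by (rule inv_all[OF ir])
  have iv': "ninv f (Suc k) (st i (Suc k))" by (rule inv_all[OF ir])
  from stepB[OF reg_step[OF ir] fin_nbrs iv Sm, of "k - k0"]
  have "\<forall>l\<in>mem (st i (Suc k)). sd (st i (Suc k)) l \<le> Suc (k - k0)"
  proof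
    assume h: "{l\<in>mem (st i k). sd (st i k) l \<le> k - k0} \<union> {l \<in> in_nbrs N (E k) i. \<exists>xv t. msg k l i = Some (xv, Some t) \<and> t \<le> k \<and> t \<le> k - k0}
            \<subseteq> {l\<in>mem (st i (Suc k)). sd (st i (Suc k)) l \<le> Suc (k - k0)}"
    have "mem (st i k) = {l\<in>mem (st i k). sd (st i k) l \<le> k - k0}" using g unfolding good_def by blast
    hence X: "mem (st i k) \<subseteq> {l\<in>mem (st i (Suc k)). sd (st i (Suc k)) l \<le> Suc (k - k0)}" using h by blast
    show ?thesis
      by (rule fullness[OF _ X]) (use iv iv' Sm Sm' in \<open>auto simp: ninv_def\<close>)
  qed
  thus ?thesis using Sm' e unfolding good_def by simp
qed

lemma good_mono:
  assumes ir: "i \<in> nodes N - Adv" "c i = 0" and g: "good k0 i k" and kk: "k0 \<le> k" "k \<le> k'"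
  shows "good k0 i k'"
  using kk(2)
proof (induction k' rule: dec_induct)
  case base show ?case using g .
next
  case (step m) thus ?case using good_step[OF ir] kk(1) by simp
qed

lemma mem_persist:
  assumes ir: "i \<in> nodes N - Adv" "c i = 0" and kk: "k0 \<le> k" "n*T \<le> k" "k \<le> k'"
    and l: "l \<in> mem (st i k) \<and> sd (st i k) l \<le> k - k0"
  shows "(l \<in> mem (st i k') \<and> sd (st i k') l \<le> k' - k0) \<or> good k0 i k'"
  using kk(3)
proof (induction k' rule: dec_induct)
  case base show ?case using l by blast
next
  case (step m)
  have km: "k0 \<le> m" "n*T \<le> m" using kk step.hyps by linarith+
  show ?case
  proof (cases "good k0 i m")
    case True thus ?thesis using good_step[OF ir True km(1)] by blast
  next
    case False
    hence lm: "l \<in> mem (st i m) \<and> sd (st i m) l \<le> m - k0" using step.IH by blast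
    have Sm: "fidx (st i m) \<noteq> None" by (rule part1[OF ir km(2)])
    have Sm': "fidx (st i (Suc m)) \<noteq> None" using step_Some_Some[OF reg_step[OF ir] Sm] .
    have e: "Suc m - k0 = Suc (m - k0)" using km(1) by simp
    from stepB[OF reg_step[OF ir] fin_nbrs inv_all[OF ir] Sm, of "m - k0"]
    show ?thesis
    proof
      assume "\<forall>l\<in>mem (st i (Suc m)). sd (st i (Suc m)) l \<le> Suc (m - k0)"
      thus ?thesis using Sm' e unfolding good_def by simp
    next
      assume "{l\<in>mem (st i m). sd (st i m) l \<le> m - k0} \<union> {l \<in> in_nbrs N (E m) i. \<exists>xv t. msg m l i = Some (xv, Some t) \<and> t \<le> m \<and> t \<le> m - k0}
            \<subseteq> {l\<in>mem (st i (Suc m)). sd (st i (Suc m)) l \<le> Suc (m - k0)}"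
      hence "l \<in> {l\<in>mem (st i (Suc m)). sd (st i (Suc m)) l \<le> Suc (m - k0)}" using lm by blast
      thus ?thesis using e by simp
    qed
  qed
qed

lemma sender:
  assumes ir: "i \<in> nodes N - Adv" "c i = 0" and lr: "l \<in> nodes N - Adv"
    and t: "fidx (st l k) = Some t" "t \<le> k - k0" and nb: "l \<in> in_nbrs N (E k) i"
    and kk: "k0 \<le> k" "n*T \<le> k"
  shows "(l \<in> mem (st i (Suc k)) \<and> sd (st i (Suc k)) l \<le> Suc k - k0) \<or> good k0 i (Suc k)"
proof -
  have Sm: "fidx (st i k) \<noteq> None" by (rule part1[OF ir kk(2)])
  have Sm': "fidx (st i (Suc k)) \<noteq> None" using step_Some_Some[OF reg_step[OF ir] Sm] .
  have e: "Suc k - k0 = Suc (k - k0)" using kk by simp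
  have lJ: "l \<in> {l \<in> in_nbrs N (E k) i. \<exists>xv t. msg k l i = Some (xv, Some t) \<and> t \<le> k \<and> t \<le> k - k0}"
    using msg_reg[OF lr _ nb] ir t reg_valid[OF lr t(1)] nb by auto
  from stepB[OF reg_step[OF ir] fin_nbrs inv_all[OF ir] Sm, of "k - k0"]
  show ?thesis
  proof
    assume "\<forall>l\<in>mem (st i (Suc k)). sd (st i (Suc k)) l \<le> Suc (k - k0)"
    thus ?thesis using Sm' e unfolding good_def by simp
  next
    assume "{l\<in>mem (st i k). sd (st i k) l \<le> k - k0} \<union> {l \<in> in_nbrs N (E k) i. \<exists>xv t. msg k l i = Some (xv, Some t) \<and> t \<le> k \<and> t \<le> k - k0}
            \<subseteq> {l\<in>mem (st i (Suc k)). sd (st i (Suc k)) l \<le> Suc (k - k0)}"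
    hence "l \<in> {l\<in>mem (st i (Suc k)). sd (st i (Suc k)) l \<le> Suc (k - k0)}" using lJ by blast
    thus ?thesis using e by simp
  qed
qed

lemma progress2:
  assumes ir: "i \<in> nodes N - Adv" "c i = 0" and G: "G \<subseteq> nodes N" "card G \<ge> 2*f+1"
    and kk: "k0 \<le> k1" "n*T \<le> k1"
    and snd: "\<forall>l\<in>G. \<exists>k\<in>{k1..<k2}. l \<in> in_nbrs N (E k) i \<and> l \<in> nodes N - Adv \<and>
                 (\<exists>t. fidx (st l k) = Some t \<and> t \<le> k - k0)"
  shows "good k0 i k2"
proof (rule ccontr)
  assume ng: "\<not> good k0 i k2"
  have Gne: "G \<noteq> {}" using G(2) by auto
  then obtain l1 where "l1 \<in> G" by blast
  then obtain k where "k\<in>{k1..<k2}" using snd by blast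
  hence k2b: "k0 \<le> k2" "n*T \<le> k2" using kk by auto
  have sub: "G \<subseteq> {l\<in>mem (st i k2). sd (st i k2) l \<le> k2 - k0}"
  proof
    fix l assume "l \<in> G"
    then obtain k where k: "k \<in> {k1..<k2}" "l \<in> in_nbrs N (E k) i" "l \<in> nodes N - Adv"
      "\<exists>t. fidx (st l k) = Some t \<and> t \<le> k - k0" using snd by blast
    then obtain t where t: "fidx (st l k) = Some t" "t \<le> k - k0" by blast
    have kb: "k0 \<le> k" "n*T \<le> k" "Suc k \<le> k2" using k(1) kk by auto
    from sender[OF ir k(3) t k(2) kb(1,2)]
    show "l \<in> {l\<in>mem (st i k2). sd (st i k2) l \<le> k2 - k0}"
    proof
      assume h: "l \<in> mem (st i (Suc k)) \<and> sd (st i (Suc k)) l \<le> Suc k - k0"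
      from mem_persist[OF ir _ _ kb(3) h] kb ng show ?thesis by auto
    next
      assume "good k0 i (Suc k)"
      from good_mono[OF ir this _ kb(3)] kb ng show ?thesis by auto
    qed
  qed
  have Sm: "fidx (st i k2) \<noteq> None" using part1[OF ir] k2b by simp
  have iv: "ninv f k2 (st i k2)" by (rule inv_all[OF ir])
  have finG: "finite G" using G(1) unfolding nodes_def by (auto intro: finite_subset)
  have "\<forall>l\<in>mem (st i k2). sd (st i k2) l \<le> k2 - k0"
    by (rule fullness[OF _ sub finG]) (use iv Sm G(2) in \<open>auto simp: ninv_def\<close>)
  thus False using ng Sm unfolding good_def by simp
qed


lemma part2:
  assumes p: "n \<le> p" and ir: "i \<in> nodes N - Adv" "c i = 0"
  shows "good (p*T) i ((p + n)*T)"
proof -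
  define k0 where "k0 = p*T"
  have k0n: "n*T \<le> k0" unfolding k0_def using p by simp
  define D where "D m = {i \<in> nodes N - Adv. c i = 0 \<and> \<not> good k0 i ((p+m)*T)}" for m
  have "D n = {}"
  proof (rule countdown)
    fix m
    have le: "(p+m)*T \<le> (p + Suc m) * T" by simp
    have le0: "k0 \<le> (p+m)*T" unfolding k0_def by simp
    show "D (Suc m) \<subseteq> D m"
    proof
      fix j assume j: "j \<in> D (Suc m)"
      hence jr: "j \<in> nodes N - Adv" "c j = 0" "\<not> good k0 j ((p + Suc m) * T)" unfolding D_def by auto
      have "\<not> good k0 j ((p+m) * T)"
      proof
        assume "good k0 j ((p+m) * T)"
        from good_mono[OF jr(1,2) this le0 le] jr(3) show False by simp
      qed
      thus "j \<in> D m" using jr unfolding D_def by auto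
    qed
  next
    fix m assume ne: "D m \<noteq> {}"
    have le0: "k0 \<le> (p+m)*T" unfolding k0_def by simp
    have "D m \<subseteq> nodes N - sources N c" unfolding D_def sources_def by auto
    from robust_pick[OF this ne, of "p+m"] obtain i G where i: "i \<in> D m" and G: "G \<subseteq> (nodes N - Adv) - D m"
      "card G \<ge> 2*f+1" "\<forall>l\<in>G. \<exists>k\<in>{(p+m)*T..<(Suc (p+m))*T}. l \<in> in_nbrs N (E k) i" by blast
    have ir: "i \<in> nodes N - Adv" "c i = 0" using i unfolding D_def by auto
    have "\<forall>l\<in>G. \<exists>k\<in>{(p+m)*T..<(Suc (p+m))*T}. l \<in> in_nbrs N (E k) i \<and> l \<in> nodes N - Adv \<and>
                 (\<exists>t. fidx (st l k) = Some t \<and> t \<le> k - k0)"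
    proof
      fix l assume l: "l \<in> G"
      then obtain k where k: "k\<in>{(p+m)*T..<(Suc (p+m))*T}" "l \<in> in_nbrs N (E k) i" using G(3) by blast
      have lr: "l \<in> nodes N - Adv" "l \<notin> D m" using l G(1) by auto
      have kk: "(p+m)*T \<le> k" using k(1) by simp
      have "\<exists>t. fidx (st l k) = Some t \<and> t \<le> k - k0"
      proof (cases "c l = 0")
        case True
        hence "good k0 l ((p+m)*T)" using lr unfolding D_def by auto
        hence gk: "good k0 l k" using good_mono[OF lr(1) True _ le0 kk] by simp
        then obtain t where t: "fidx (st l k) = Some t" unfolding good_def by auto
        thus ?thesis using good_bound[OF lr(1) True gk t] by blast
      next
        case False thus ?thesis using reg_src[OF lr(1) False] by auto
      qed
      thus "\<exists>k\<in>{(p+m)*T..<(Suc (p+m))*T}. l \<in> in_nbrs N (E k) i \<and> l \<in> nodes N - Adv \<and>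
                 (\<exists>t. fidx (st l k) = Some t \<and> t \<le> k - k0)"
        using k lr by blast
    qed
    moreover have "n*T \<le> (p+m)*T" using k0n le0 by linarith
    ultimately have "good k0 i (Suc (p+m) * T)" using progress2[OF ir _ G(2) le0] G(1) by blast
    hence "i \<notin> D (Suc m)" unfolding D_def by auto
    thus "D (Suc m) \<noteq> D m" using i by blast
  next
    show "finite (D 0)" unfolding D_def nodes_def by auto
  next
    have "D 0 \<subseteq> nodes N - sources N c" unfolding D_def sources_def by auto
    moreover have "finite (nodes N - sources N c)" unfolding nodes_def by auto
    ultimately show "card (D 0) \<le> n" using card_ns card_mono by metis
  qed
  thus ?thesis using ir unfolding D_def k0_def by auto
qed

lemma final: "\<forall>i \<in> nodes N - Adv. \<forall>k \<ge> n * T.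
           fidx (st i k) \<noteq> None \<and> (\<forall>t. fidx (st i k) = Some t \<longrightarrow> t \<le> 2 * n * T)"
proof (intro ballI allI impI)
  fix i k assume i: "i \<in> nodes N - Adv" and k: "n * T \<le> k"
  show "fidx (st i k) \<noteq> None \<and> (\<forall>t. fidx (st i k) = Some t \<longrightarrow> t \<le> 2 * n * T)"
  proof (cases "c i = 0")
    case False thus ?thesis using reg_src[OF i False] by simp
  next
    case True
    have S: "fidx (st i k) \<noteq> None" using part1[OF i True k] .
    have n1: "1 \<le> n"
    proof -
      have "i \<in> nodes N - sources N c" using i True unfolding sources_def by auto
      hence "nodes N - sources N c \<noteq> {}" by blast
      moreover have "finite (nodes N - sources N c)" unfolding nodes_def by auto
      ultimately show ?thesis using card_ns by (metis card_0_eq less_one not_le)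
    qed
    have "\<forall>t. fidx (st i k) = Some t \<longrightarrow> t \<le> 2 * n * T"
    proof (intro allI impI)
      fix t assume t: "fidx (st i k) = Some t"
      show "t \<le> 2 * n * T"
      proof (cases "k \<le> 2 * n * T")
        case True thus ?thesis using reg_valid[OF i t] by linarith
      next
        case False
        define q where "q = k div T"
        have Tp: "T > 0" by (rule Tpos)
        have qT: "q * T \<le> k" unfolding q_def by (simp add: div_times_less_eq_dividend)
        have qT2: "k < q * T + T" unfolding q_def using Tp
          by (metis add.commute div_mult_mod_eq mod_less_divisor nat_add_left_cancel_less)
        have "2 * n * T \<le> k" using False by simp
        hence "2 * n \<le> q" unfolding q_def using Tp by (simp add: less_eq_div_iff_mult_less_eq mult.assoc)
        hence pn: "n \<le> q - n" by simp
        from part2[OF pn i True] have g: "good ((q - n) * T) i ((q - n + n) * T)" .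
        have e1: "q - n + n = q" using \<open>2*n \<le> q\<close> by simp
        have g2: "good ((q - n) * T) i k"
          using good_mono[OF i True g[unfolded e1] _ qT] by (simp add: diff_mult_distrib)
        have b: "t \<le> k - (q - n) * T" using good_bound[OF i True g2 t] .
        have e2: "(q - n) * T = q * T - n * T" by (simp add: diff_mult_distrib)
        have "n \<le> q" using pn by linarith
        hence nq: "n * T \<le> q * T" by (rule mult_le_mono1)
        have "1 * T \<le> n * T" using n1 by (rule mult_le_mono1)
        hence "T + n * T \<le> 2 * n * T" by simp
        thus ?thesis using b e2 nq qT qT2 by linarith
      qed
    qed
    thus ?thesis using S by blast
  qed
qed

end

theorem lemma6:
  fixes N f T :: nat and a :: real and c L x :: "nat \<Rightarrow> real"
    and E :: "nat \<Rightarrow> (nat \<times> nat) set" and Adv :: "nat set"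
    and st :: "nat \<Rightarrow> nat \<Rightarrow> nstate"
    and msg :: "nat \<Rightarrow> nat \<Rightarrow> nat \<Rightarrow> (real \<times> nat option) option"
  assumes edges: "\<forall>k. E k \<subseteq> nodes N \<times> nodes N"
    and robust: "jointly_strongly_robust_T N E (sources N c) (3 * f + 1) T"
    and adv: "Adv \<subseteq> nodes N" "card Adv \<le> f"
    and exec: "alg2_exec N f a c L E Adv x st msg"
  shows "\<forall>i \<in> nodes N - Adv. \<forall>k \<ge> (N - card (sources N c)) * T.
           fidx (st i k) \<noteq> None \<and>
           (\<forall>t. fidx (st i k) = Some t \<longrightarrow> t \<le> 2 * (N - card (sources N c)) * T)"
  proof -
  interpret ctx N f T a c L x E Adv st msg using edges robust adv exec by unfold_locales
  show ?thesis using final by simp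
qed

end
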